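(* Let $1\le m<n$. Fix $\mathbf s$ and valuations $v_1,\dots,v_n$, rename the bidders so that $v_1(\mathbf s)\ge\cdots\ge v_n(\mathbf s)$, and let $k=\max\{i:v_i(\mathbf s)>v_m(\mathbf s)/2\}$. Then for every $i\in[n]$, $$\mathbb E_{r,\pi}[c^m_i]\le\frac{m}{i(i+1)}+\frac{m}{k+1}+\sum_{j\in[k]\setminus\{i\}}\frac{m}{j(j+1)}\log_2^\dagger\!\left(\frac{v_i(\mathbf s)}{\underline v_j^{(i)}(\mathbf s)}\right).$$
   Context: $n$ bidders, signals $s_i\in S_i\subseteq\mathbb R$, valuations $v_i:\mathbf S\to\mathbb R_{>0}$. Lower estimates $\underline v_j^{(i)}(\mathbf s)=\inf_{o_i\in S_i}v_j(o_i,\mathbf s_{-i})$. $\log_2^\dagger(\alpha)=\max(0,\min(1,\log_2\alpha))$, with $a/0=\infty$, $\log_2\infty=\infty$. For $r\in[0,1)$, $w>0$: $f_r(w)=2^{r+k'}$ for the integer $k'$ with $2^{r+k'}\le w<2^{r+k'+1}$; $f_r(0)=0$. For a permutation $\pi$ of $[n]$, $a$ associated with bidder $i$ and $b$ with bidder $j$: $a>_\pi b$ iff $a>b$, or $a=b$ and $\pi(i)>\pi(j)$. $c^m_i(r,\pi)=1$ iff $f_r(v_i(\mathbf s))>_\pi f_r(\underline v_j^{(i)}(\mathbf s))$ for at least $n-m$ bidders $j\ne i$, else $0$; $r\sim U[0,1)$, $\pi$ uniform, independent. *)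

theory Defs
  imports "HOL-Analysis.Analysis"
begin

text \<open>Bidders are 1..n. A signal profile is an element of PiE {1..n} S.
  v i t is the valuation of bidder i at signal profile t.\<close>

definition lower_est :: "(nat \<Rightarrow> (nat \<Rightarrow> real) \<Rightarrow> real) \<Rightarrow> (nat \<Rightarrow> real set)
    \<Rightarrow> (nat \<Rightarrow> real) \<Rightarrow> nat \<Rightarrow> nat \<Rightarrow> real" where
  "lower_est v S s i j = Inf ((\<lambda>x. v j (s(i := x))) ` S i)"

text \<open>log2-dagger of a/b, with a/0 = infinity, log2 infinity = infinity.\<close>
definition log2_dag :: "real \<Rightarrow> real \<Rightarrow> real" where
  "log2_dag a b = (if b = 0 then 1 else max 0 (min 1 (log 2 (a / b))))"

definition f_r :: "real \<Rightarrow> real \<Rightarrow> real" where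
  "f_r r w = (if w = 0 then 0 else
     2 powr (r + real_of_int (THE k::int. 2 powr (r + k) \<le> w \<and> w < 2 powr (r + k + 1))))"

definition gt_pi :: "(nat \<Rightarrow> nat) \<Rightarrow> real \<Rightarrow> nat \<Rightarrow> real \<Rightarrow> nat \<Rightarrow> bool" where
  "gt_pi \<pi> a i b j \<longleftrightarrow> a > b \<or> (a = b \<and> \<pi> i > \<pi> j)"

definition c_m :: "nat \<Rightarrow> nat \<Rightarrow> (nat \<Rightarrow> (nat \<Rightarrow> real) \<Rightarrow> real) \<Rightarrow> (nat \<Rightarrow> real set)
    \<Rightarrow> (nat \<Rightarrow> real) \<Rightarrow> nat \<Rightarrow> real \<Rightarrow> (nat \<Rightarrow> nat) \<Rightarrow> real" where
  "c_m n m v S s i r \<pi> =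
     (if card {j \<in> {1..n} - {i}. gt_pi \<pi> (f_r r (v i s)) i (f_r r (lower_est v S s i j)) j} \<ge> n - m
      then 1 else 0)"

definition exp_c_m :: "nat \<Rightarrow> nat \<Rightarrow> (nat \<Rightarrow> (nat \<Rightarrow> real) \<Rightarrow> real) \<Rightarrow> (nat \<Rightarrow> real set)
    \<Rightarrow> (nat \<Rightarrow> real) \<Rightarrow> nat \<Rightarrow> real" where
  "exp_c_m n m v S s i =
     (\<Sum>\<pi>\<in>{p. p permutes {1..n}}. (LINT r:{0..<1}|lborel. c_m n m v S s i r \<pi>)) / fact n"

end

theory Submission imports Defs begin

lemma f_r_pos: assumes "w > 0" shows "f_r r w = 2 powr (r + real_of_int \<lfloor>log 2 w - r\<rfloor>)"
proof -
  have P: "(2 powr (r + real_of_int k) \<le> w \<and> w < 2 powr (r + real_of_int k + 1)) \<longleftrightarrow> k = \<lfloor>log 2 w - r\<rfloor>" for k :: int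
  proof -
    have "(2 powr (r + real_of_int k) \<le> w) \<longleftrightarrow> r + k \<le> log 2 w"
      using le_log_iff[of 2 w "r + k"] assms by simp
    moreover have "(w < 2 powr (r + real_of_int k + 1)) \<longleftrightarrow> \<not> (r + k + 1 \<le> log 2 w)"
      using le_log_iff[of 2 w "r + k + 1"] assms by auto
    moreover have "(r + k \<le> log 2 w \<and> \<not> (r + k + 1 \<le> log 2 w)) \<longleftrightarrow> k = \<lfloor>log 2 w - r\<rfloor>"
      by (subst eq_commute, subst floor_eq_iff) linarith
    ultimately show ?thesis by simp
  qed
  have "(THE k::int. 2 powr (r + k) \<le> w \<and> w < 2 powr (r + k + 1)) = \<lfloor>log 2 w - r\<rfloor>"
    using P by (intro the_equality) auto
  then show ?thesis using assms by (simp add: f_r_def)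
qed

lemma f_r_meas: assumes "w \<ge> 0" shows "(\<lambda>r. f_r r w) \<in> borel_measurable borel"
proof (cases "w = 0")
  case True then show ?thesis by (simp add: f_r_def)
next
  case False
  then have "(\<lambda>r. f_r r w) = (\<lambda>r. 2 powr (r + real_of_int \<lfloor>log 2 w - r\<rfloor>))"
    using assms f_r_pos by auto
  then show ?thesis by simp measurable
qed

lemma f_r_less: assumes "L > 0" "V > 0"
  shows "f_r r L < f_r r V \<longleftrightarrow> \<lfloor>log 2 L - r\<rfloor> < \<lfloor>log 2 V - r\<rfloor>"
  using assms by (simp add: f_r_pos)

lemma f_r_gt0: "V > 0 \<Longrightarrow> f_r r V > 0"
  by (simp add: f_r_pos)

lemma f_r_mono: assumes "L \<le> V" "L \<ge> 0" shows "f_r r L \<le> f_r r V"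
proof (cases "L = 0")
  case True then show ?thesis using assms by (cases "V = 0") (auto simp: f_r_def intro: less_imp_le)
next
  case False
  then have "L > 0" "V > 0" using assms by auto
  moreover have "\<lfloor>log 2 L - r\<rfloor> \<le> \<lfloor>log 2 V - r\<rfloor>"
    using assms \<open>L > 0\<close> by (intro floor_mono) simp
  ultimately show ?thesis by (simp add: f_r_pos)
qed


lemma f_r_set_meas: assumes "L \<ge> 0" "V \<ge> 0" shows "{r. f_r r L < f_r r V} \<in> sets borel"
  using f_r_meas[OF assms(1)] f_r_meas[OF assms(2)] by measurable

lemma unit_fm: "{0..<1::real} \<in> fmeasurable lborel"
  by (simp add: fmeasurable_def)

lemma meas_le1: assumes "X \<in> sets borel" shows "measure lborel ({0..<1::real} \<inter> X) \<le> 1"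
proof -
  have "measure lborel ({0..<1::real} \<inter> X) \<le> measure lborel {0..<1::real}"
    by (rule measure_mono_fmeasurable) (use assms unit_fm in auto)
  then show ?thesis by simp
qed

lemma floor_set_bound:
  fixes a b :: real
  assumes "0 < b - a" "b - a < 1"
  shows "measure lborel ({0..<1::real} \<inter> {r. \<lfloor>a - r\<rfloor> < \<lfloor>b - r\<rfloor>}) \<le> b - a"
proof -
  define z where "z = \<lfloor>b\<rfloor>"
  have z: "real_of_int z \<le> b" "b < real_of_int z + 1" unfolding z_def by linarith+
  have key: "(a - z < r \<and> r \<le> b - z) \<or> (a - z + 1 < r \<and> r < 1)"
    if r: "0 \<le> r" "r < 1" "\<lfloor>a - r\<rfloor> < \<lfloor>b - r\<rfloor>" for r
  proof -
    define w where "w = \<lfloor>b - r\<rfloor>"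
    have w: "real_of_int w \<le> b - r" "b - r < real_of_int w + 1" unfolding w_def by linarith+
    have aw: "a - r < real_of_int w" using r(3) unfolding w_def by (simp add: floor_less_iff)
    have "real_of_int w \<le> b" using w r by linarith
    then have "w \<le> z" unfolding z_def by (simp add: le_floor_iff)
    have "real_of_int z - 2 < real_of_int w" using w z r by linarith
    then have "z - 1 \<le> w" by linarith
    have "w = z \<or> w = z - 1" using \<open>w \<le> z\<close> \<open>z - 1 \<le> w\<close> by linarith
    then show ?thesis
    proof
      assume "w = z" then show ?thesis using w aw by auto
    next
      assume "w = z - 1" then show ?thesis using w aw r by auto
    qed
  qed
  show ?thesis
  proof (cases "real_of_int z \<le> a")
    case True
    have sub: "{0..<1::real} \<inter> {r. \<lfloor>a - r\<rfloor> < \<lfloor>b - r\<rfloor>} \<subseteq> {a - z<..b - z}"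
      using key True by auto
    have "measure lborel ({0..<1::real} \<inter> {r. \<lfloor>a - r\<rfloor> < \<lfloor>b - r\<rfloor>}) \<le> measure lborel {a - z<..b - z}"
      by (rule measure_mono_fmeasurable[OF sub]) (use assms in \<open>auto simp: fmeasurable_def\<close>)
    then show ?thesis using assms by simp
  next
    case False
    have sub: "{0..<1::real} \<inter> {r. \<lfloor>a - r\<rfloor> < \<lfloor>b - r\<rfloor>} \<subseteq> {0..b - z} \<union> {a - z + 1<..<1}"
    proof
      fix r assume "r \<in> {0..<1::real} \<inter> {r. \<lfloor>a - r\<rfloor> < \<lfloor>b - r\<rfloor>}"
      then have "0 \<le> r" "r < 1" "\<lfloor>a - r\<rfloor> < \<lfloor>b - r\<rfloor>" by auto
      from key[OF this] \<open>0 \<le> r\<close> \<open>r < 1\<close> show "r \<in> {0..b - z} \<union> {a - z + 1<..<1}" by auto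
    qed
    have "measure lborel ({0..<1::real} \<inter> {r. \<lfloor>a - r\<rfloor> < \<lfloor>b - r\<rfloor>}) \<le> measure lborel ({0..b - z} \<union> {a - z + 1<..<1})"
      apply (rule measure_mono_fmeasurable[OF sub])
       apply simp
      apply (intro fmeasurable.Un)
      using False z by (auto simp: fmeasurable_def)
    also have "\<dots> \<le> measure lborel {0..b - z} + measure lborel {a - z + 1<..<1}"
      by (rule measure_Un_le) auto
    also have "\<dots> = b - a" using z False by simp
    finally show ?thesis .
  qed
qed

lemma prob_bound: assumes "V > 0" "L \<ge> 0"
  shows "measure lborel ({0..<1::real} \<inter> {r. f_r r L < f_r r V}) \<le> log2_dag V L"
proof (cases "L = 0")
  case True
  then show ?thesis using meas_le1[OF f_r_set_meas[of L V]] assms by (simp add: log2_dag_def)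
next
  case False
  then have L: "L > 0" using assms by auto
  have ld: "log 2 (V / L) = log 2 V - log 2 L" using L assms by (simp add: log_divide)
  have eq: "{r. f_r r L < f_r r V} = {r. \<lfloor>log 2 L - r\<rfloor> < \<lfloor>log 2 V - r\<rfloor>}"
    using f_r_less[OF L assms(1)] by auto
  consider "log 2 V - log 2 L \<ge> 1" | "log 2 V - log 2 L \<le> 0" | "0 < log 2 V - log 2 L" "log 2 V - log 2 L < 1"
    by linarith
  then show ?thesis
  proof cases
    case 1
    then show ?thesis using meas_le1[OF f_r_set_meas[of L V]] assms L ld by (simp add: log2_dag_def)
  next
    case 2
    have "{r. \<lfloor>log 2 L - r\<rfloor> < \<lfloor>log 2 V - r\<rfloor>} = {}"
    proof -
      have "\<lfloor>log 2 V - r\<rfloor> \<le> \<lfloor>log 2 L - r\<rfloor>" for r by (intro floor_mono) (use 2 in linarith)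
      then show ?thesis by (auto simp: not_less[symmetric])
    qed
    then show ?thesis using eq by (simp add: log2_dag_def)
  next
    case 3
    then show ?thesis using floor_set_bound[OF 3] eq ld L by (simp add: log2_dag_def)
  qed
qed


lemma rank_card:
  fixes \<pi> :: "nat \<Rightarrow> nat"
  assumes "inj_on \<pi> U" "finite U"
  shows "card {x\<in>U. q \<le> card {j\<in>U. \<pi> j < \<pi> x}} = card U - q"
proof -
  define X where "X x = card {j\<in>U. \<pi> j < \<pi> x}" for x
  have lt: "X x < X y" if "x \<in> U" "y \<in> U" "\<pi> x < \<pi> y" for x y
  proof -
    have "{j\<in>U. \<pi> j < \<pi> x} \<subset> {j\<in>U. \<pi> j < \<pi> y}" using that by auto
    then show ?thesis unfolding X_def by (intro psubset_card_mono) (use assms in auto)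
  qed
  have inj: "inj_on X U"
  proof (rule inj_onI)
    fix x y assume xy: "x \<in> U" "y \<in> U" "X x = X y"
    show "x = y"
    proof (rule ccontr)
      assume "x \<noteq> y"
      then have "\<pi> x \<noteq> \<pi> y" using assms(1) xy by (meson inj_on_eq_iff)
      then show False using lt[of x y] lt[of y x] xy by (cases "\<pi> x < \<pi> y") auto
    qed
  qed
  have sub: "X ` U \<subseteq> {0..<card U}"
  proof
    fix y assume "y \<in> X ` U"
    then obtain x where x: "x \<in> U" "y = X x" by auto
    have "{j\<in>U. \<pi> j < \<pi> x} \<subset> U" using x by auto
    then have "X x < card U" unfolding X_def using assms(2) by (intro psubset_card_mono) auto
    then show "y \<in> {0..<card U}" using x by auto
  qed
  have img: "X ` U = {0..<card U}"
    using sub card_image[OF inj] assms(2) by (intro card_subset_eq) auto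
  have "card {x\<in>U. q \<le> X x} = card (X ` {x\<in>U. q \<le> X x})"
    by (rule card_image[symmetric]) (rule inj_on_subset[OF inj], auto)
  also have "X ` {x\<in>U. q \<le> X x} = {q..<card U}"
  proof (rule set_eqI, rule iffI)
    fix y assume "y \<in> {q..<card U}"
    then have "y \<in> X ` U" "q \<le> y" using img by auto
    then obtain x where "x \<in> U" "y = X x" by auto
    then show "y \<in> X ` {x\<in>U. q \<le> X x}" using \<open>q \<le> y\<close> by auto
  qed (use sub in auto)
  finally show ?thesis unfolding X_def by simp
qed

lemma perm_count:
  fixes U D :: "nat set" and i q :: nat
  assumes "finite D" "U \<subseteq> D" "i \<in> U"
  shows "card {\<pi>. \<pi> permutes D \<and> q \<le> card {j\<in>U. \<pi> j < \<pi> i}} * card U = fact (card D) * (card U - q)"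
proof -
  define P where "P = {\<pi>. \<pi> permutes D}"
  define X where "X x \<pi> = card {j\<in>U. \<pi> j < \<pi> x}" for x and \<pi> :: "nat \<Rightarrow> nat"
  have finU: "finite U" using assms finite_subset by auto
  have finP: "finite P" unfolding P_def using assms(1) by (simp add: finite_permutations)
  have sym: "card {\<pi>\<in>P. q \<le> X i \<pi>} = card {\<pi>\<in>P. q \<le> X x \<pi>}" if x: "x \<in> U" for x
  proof -
    define \<tau> where "\<tau> = Transposition.transpose i x"
    have \<tau>U: "\<tau> ` U = U" unfolding \<tau>_def using x assms(3)
      using permutes_image[OF permutes_swap_id[OF assms(3) x]] by simp
    have \<tau>inv: "\<tau> (\<tau> y) = y" for y unfolding \<tau>_def by simp
    have injt: "inj \<tau>" by (rule injI) (metis \<tau>inv)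
    have XX: "X i (\<pi> \<circ> \<tau>) = X x \<pi>" for \<pi>
    proof -
      have "{j\<in>U. (\<pi> \<circ> \<tau>) j < (\<pi> \<circ> \<tau>) i} = \<tau> ` {j\<in>U. \<pi> j < \<pi> x}"
      proof -
        have ti: "\<tau> i = x" unfolding \<tau>_def by simp
        show ?thesis
        proof (rule set_eqI, rule iffI)
          fix j assume "j \<in> {j\<in>U. (\<pi> \<circ> \<tau>) j < (\<pi> \<circ> \<tau>) i}"
          then have "\<tau> j \<in> U" "\<pi> (\<tau> j) < \<pi> x" using \<tau>U ti by auto
          then show "j \<in> \<tau> ` {j\<in>U. \<pi> j < \<pi> x}" by (intro image_eqI[of _ _ "\<tau> j"]) (simp_all add: \<tau>inv)
        next
          fix j assume "j \<in> \<tau> ` {j\<in>U. \<pi> j < \<pi> x}"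
          then obtain y where "y \<in> U" "\<pi> y < \<pi> x" "j = \<tau> y" by auto
          then show "j \<in> {j\<in>U. (\<pi> \<circ> \<tau>) j < (\<pi> \<circ> \<tau>) i}" using \<tau>inv \<tau>U ti by auto
        qed
      qed
      then show ?thesis unfolding X_def using card_image[OF inj_on_subset[OF injt]] by auto
    qed
    have "{\<pi>\<in>P. q \<le> X i \<pi>} = (\<lambda>\<pi>. \<pi> \<circ> \<tau>) ` {\<pi>\<in>P. q \<le> X x \<pi>}"
    proof (rule set_eqI, rule iffI)
      fix \<pi> assume \<pi>: "\<pi> \<in> {\<pi>\<in>P. q \<le> X i \<pi>}"
      have "\<pi> \<circ> \<tau> \<circ> \<tau> = \<pi>" using \<tau>inv by (auto simp: fun_eq_iff)
      moreover have "\<pi> \<circ> \<tau> \<in> {\<pi>\<in>P. q \<le> X x \<pi>}"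
      proof -
        have "\<pi> \<circ> \<tau> permutes D" using \<pi> x assms unfolding P_def \<tau>_def
          by (auto intro!: permutes_compose permutes_swap_id)
        moreover have "X x (\<pi> \<circ> \<tau>) = X i \<pi>" using XX[of "\<pi> \<circ> \<tau>"] \<open>\<pi> \<circ> \<tau> \<circ> \<tau> = \<pi>\<close> by simp
        ultimately show ?thesis using \<pi> unfolding P_def by auto
      qed
      ultimately show "\<pi> \<in> (\<lambda>\<pi>. \<pi> \<circ> \<tau>) ` {\<pi>\<in>P. q \<le> X x \<pi>}" by (intro image_eqI[of _ _ "\<pi> \<circ> \<tau>"]) auto
    next
      fix \<pi> assume "\<pi> \<in> (\<lambda>\<pi>. \<pi> \<circ> \<tau>) ` {\<pi>\<in>P. q \<le> X x \<pi>}"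
      then obtain \<sigma> where \<sigma>: "\<sigma> \<in> P" "q \<le> X x \<sigma>" "\<pi> = \<sigma> \<circ> \<tau>" by auto
      have "\<sigma> \<circ> \<tau> permutes D" using \<sigma> x assms unfolding P_def \<tau>_def
        by (auto intro!: permutes_compose permutes_swap_id)
      then show "\<pi> \<in> {\<pi>\<in>P. q \<le> X i \<pi>}" using \<sigma> XX unfolding P_def by auto
    qed
    moreover have "inj (\<lambda>\<pi>::nat\<Rightarrow>nat. \<pi> \<circ> \<tau>)"
    proof (rule injI)
      fix a b :: "nat \<Rightarrow> nat" assume "a \<circ> \<tau> = b \<circ> \<tau>"
      then have "a \<circ> \<tau> \<circ> \<tau> = b \<circ> \<tau> \<circ> \<tau>" by simp
      then show "a = b" by (simp add: fun_eq_iff \<tau>inv)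
    qed
    ultimately show ?thesis using card_image[OF inj_on_subset[OF \<open>inj (\<lambda>\<pi>::nat\<Rightarrow>nat. \<pi> \<circ> \<tau>)\<close> subset_UNIV]] by simp
  qed
  have "(\<Sum>x\<in>U. card {\<pi>\<in>P. q \<le> X x \<pi>}) = (\<Sum>x\<in>U. \<Sum>\<pi>\<in>P. if q \<le> X x \<pi> then 1 else 0)"
    by (intro sum.cong refl) (simp add: sum.inter_filter[OF finP, symmetric])
  also have "\<dots> = (\<Sum>\<pi>\<in>P. \<Sum>x\<in>U. if q \<le> X x \<pi> then 1 else 0)" by (rule sum.swap)
  also have "\<dots> = (\<Sum>\<pi>\<in>P. card {x\<in>U. q \<le> X x \<pi>})"
    by (intro sum.cong refl) (simp add: sum.inter_filter[OF finU, symmetric])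
  also have "\<dots> = (\<Sum>\<pi>\<in>P. card U - q)"
  proof (intro sum.cong refl)
    fix \<pi> assume "\<pi> \<in> P"
    then have "inj_on \<pi> U" unfolding P_def using permutes_inj inj_on_subset subset_UNIV by blast
    then show "card {x\<in>U. q \<le> X x \<pi>} = card U - q" unfolding X_def using rank_card finU by blast
  qed
  also have "\<dots> = fact (card D) * (card U - q)"
    unfolding P_def using card_permutations[OF refl assms(1)] by simp
  finally have "(\<Sum>x\<in>U. card {\<pi>\<in>P. q \<le> X x \<pi>}) = fact (card D) * (card U - q)" .
  moreover have "(\<Sum>x\<in>U. card {\<pi>\<in>P. q \<le> X x \<pi>}) = card U * card {\<pi>\<in>P. q \<le> X i \<pi>}"
  proof -
    have "(\<Sum>x\<in>U. card {\<pi>\<in>P. q \<le> X x \<pi>}) = (\<Sum>x\<in>U. card {\<pi>\<in>P. q \<le> X i \<pi>})"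
      using sym by (intro sum.cong refl) simp
    then show ?thesis by simp
  qed
  ultimately show ?thesis unfolding P_def X_def by (simp add: mult.commute)
qed


lemma f_r_meas_all[measurable]: "(\<lambda>r. f_r r w) \<in> borel_measurable borel"
proof (cases "w \<ge> 0")
  case True then show ?thesis by (rule f_r_meas)
next
  case False
  have eq: "(\<lambda>k::int. 2 powr (r + k) \<le> w \<and> w < 2 powr (r + k + 1)) = (\<lambda>k. False)" for r
    using False by (auto simp: fun_eq_iff) (smt (verit) powr_gt_zero)
  have "f_r r w = 2 powr (r + real_of_int (THE k::int. False))" for r
    unfolding f_r_def using False by (simp add: eq)
  then have "(\<lambda>r. f_r r w) = (\<lambda>r. 2 powr (r + real_of_int (THE k::int. False)))"
    by auto
  then show ?thesis by simp
qed

lemma harm: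
  fixes k :: nat and A :: "nat set"
  assumes "A \<subseteq> {1..k}"
  shows "card A \<le> k \<and> 1 / (real k - real (card A) + 1) - 1 / (real k + 1) \<le> (\<Sum>j\<in>A. 1 / (real j * (real j + 1)))"
  using assms
proof (induction k arbitrary: A)
  case 0
  then show ?case by auto
next
  case (Suc k)
  have finA: "finite A" using Suc.prems finite_subset by auto
  show ?case
  proof (cases "Suc k \<in> A")
    case False
    have sub: "A \<subseteq> {1..k}"
    proof
      fix x assume "x \<in> A"
      then have "x \<in> {1..Suc k}" "x \<noteq> Suc k" using Suc.prems False by auto
      then show "x \<in> {1..k}" by auto
    qed
    note IH = Suc.IH[OF sub]
    define u where "u = real k - real (card A)"
    have u: "0 \<le> u" "u \<le> real k" using IH unfolding u_def by auto
    have "1 / (real (Suc k) - real (card A) + 1) - 1 / (real (Suc k) + 1)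
          \<le> 1 / (real k - real (card A) + 1) - 1 / (real k + 1)"
    proof -
      have "1 / (real k + 1) - 1 / (real k + 2) \<le> 1 / (u + 1) - 1 / (u + 2)"
      proof -
        have e1: "1 / (real k + 1) - 1 / (real k + 2) = 1 / ((real k + 1) * (real k + 2))"
          by (simp add: field_simps)
        have e2: "1 / (u + 1) - 1 / (u + 2) = 1 / ((u + 1) * (u + 2))"
          using u by (simp add: field_simps)
        have "(u + 1) * (u + 2) \<le> (real k + 1) * (real k + 2)"
          using u by (intro mult_mono) auto
        then have "1 / ((real k + 1) * (real k + 2)) \<le> 1 / ((u + 1) * (u + 2))"
          using u by (intro divide_left_mono) auto
        then show ?thesis using e1 e2 by simp
      qed
      then show ?thesis unfolding u_def by (simp add: algebra_simps)
    qed
    then show ?thesis using IH by simp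
  next
    case True
    define A' where "A' = A - {Suc k}"
    have sub: "A' \<subseteq> {1..k}" using Suc.prems unfolding A'_def by auto
    note IH = Suc.IH[OF sub]
    have cA: "card A = card A' + 1"
    proof -
      have "card A > 0" using True finA card_gt_0_iff by blast
      then show ?thesis unfolding A'_def using True finA by (simp add: card_Diff_singleton)
    qed
    have sA: "(\<Sum>j\<in>A. 1 / (real j * (real j + 1))) = (\<Sum>j\<in>A'. 1 / (real j * (real j + 1))) + 1 / (real (Suc k) * (real (Suc k) + 1))"
      unfolding A'_def using True finA by (simp add: sum.remove)
    have "1 / (real (Suc k) + 1) = 1 / (real k + 1) - 1 / (real (Suc k) * (real (Suc k) + 1))"
      by (simp add: field_simps) (smt (verit) of_nat_0_le_iff mult_nonneg_nonneg)
    then show ?thesis using IH cA sA by (simp add: algebra_simps)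
  qed
qed

lemma integrable_unit:
  fixes f :: "real \<Rightarrow> real"
  assumes "f \<in> borel_measurable borel" "\<And>r. \<bar>f r\<bar> \<le> B"
  shows "set_integrable lborel {0..<1::real} f"
proof -
  have "integrable lborel (\<lambda>r. indicator {0..<1::real} r * B)"
    by (intro integrable_mult_left) (simp add: integrable_real_indicator)
  then have "integrable lborel (\<lambda>r. indicator {0..<1::real} r *\<^sub>R f r)"
    by (rule Bochner_Integration.integrable_bound)
       (use assms in \<open>auto simp: indicator_def intro: order_trans[OF _ abs_ge_self]\<close>)
  then show ?thesis by (simp add: set_integrable_def)
qed


lemma card_sum_ind:
  assumes "finite J"
  shows "real (card {j\<in>J. r \<in> B j}) = (\<Sum>j\<in>J. indicator (B j) r)"
proof -
  have e1: "{j\<in>J. r \<in> B j} = J \<inter> {j. r \<in> B j}" by auto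
  have e2: "(\<Sum>j\<in>J. of_bool (r \<in> B j)) = (real (card (J \<inter> {j. r \<in> B j})))"
    by (rule sum_of_bool_eq) (use assms in auto)
  have e3: "(\<Sum>j\<in>J. indicator (B j) r) = (\<Sum>j\<in>J. of_bool (r \<in> B j) :: real)"
    by (intro sum.cong refl) (simp add: indicator_def)
  show ?thesis unfolding e1 e3 e2 ..
qed

lemma c_meas: "(\<lambda>r. c_m n m v S s i r \<pi>) \<in> borel_measurable borel"
proof -
  define B where "B j = {r. gt_pi \<pi> (f_r r (v i s)) i (f_r r (lower_est v S s i j)) j}" for j
  have Bm[measurable]: "B j \<in> sets borel" for j unfolding B_def gt_pi_def by measurable
  have "(\<lambda>r. c_m n m v S s i r \<pi>) = (\<lambda>r. if real (n - m) \<le> (\<Sum>j\<in>{1..n} - {i}. indicator (B j) r) then 1 else 0)"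
  proof
    fix r
    have "real (card {j\<in>{1..n} - {i}. r \<in> B j}) = (\<Sum>j\<in>{1..n} - {i}. indicator (B j) r)"
      by (rule card_sum_ind) simp
    then show "c_m n m v S s i r \<pi> = (if real (n - m) \<le> (\<Sum>j\<in>{1..n} - {i}. indicator (B j) r) then 1 else 0)"
      unfolding c_m_def B_def by (simp del: of_nat_diff)
  qed
  also have "\<dots> \<in> borel_measurable borel" by measurable
  finally show ?thesis .
qed


theorem mainTheorem17:
  fixes n m :: nat and S :: "nat \<Rightarrow> real set" and s :: "nat \<Rightarrow> real"
    and v :: "nat \<Rightarrow> (nat \<Rightarrow> real) \<Rightarrow> real" and k :: nat
  assumes "1 \<le> m" and "m < n"
    and "s \<in> PiE {1..n} S"
    and "\<And>t j. t \<in> PiE {1..n} S \<Longrightarrow> j \<in> {1..n} \<Longrightarrow> v j t > 0"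
    and "\<And>a b. 1 \<le> a \<Longrightarrow> a \<le> b \<Longrightarrow> b \<le> n \<Longrightarrow> v b s \<le> v a s"
    and "k = Max {a \<in> {1..n}. v a s > v m s / 2}"
    and "i \<in> {1..n}"
  shows "exp_c_m n m v S s i \<le>
           real m / (real i * (real i + 1)) + real m / (real k + 1)
           + (\<Sum>j\<in>{1..k} - {i}. real m / (real j * (real j + 1))
                 * log2_dag (v i s) (lower_est v S s i j))"
proof -
  define P where "P = {\<pi>. \<pi> permutes {1..n}}"
  define V where "V = v i s"
  define L where "L j = lower_est v S s i j" for j
  define A where "A j = {r. f_r r (L j) < f_r r V}" for j
  define J where "J = {1..k} - {i}"
  define w where "w j = real m / (real j * (real j + 1))" for j
  define C where "C = real m / (real i * (real i + 1)) + real m / (real k + 1)"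
  define g where "g r = C + (\<Sum>j\<in>J. w j * indicator (A j) r)" for r
  have Vpos: "V > 0" using assms(4)[OF assms(3) assms(7)] V_def by simp
  have Lnn: "L j \<ge> 0" if "j \<in> {1..n}" for j
  proof -
    have si: "s i \<in> S i" using assms(3,7) by (auto simp: PiE_iff)
    have "0 \<le> v j (s(i := x))" if "x \<in> S i" for x
    proof -
      have "s(i := x) \<in> PiE {1..n} S" using assms(3,7) that by (auto simp: PiE_iff extensional_def)
      then show ?thesis using assms(4) \<open>j \<in> {1..n}\<close> less_imp_le by blast
    qed
    then show ?thesis unfolding L_def lower_est_def using si by (intro cINF_greatest) auto
  qed
  define K where "K = {a \<in> {1..n}. v a s > v m s / 2}"
  have mK: "m \<in> K" unfolding K_def using assms(1,2) assms(4)[OF assms(3), of m] by auto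
  have "k \<in> K" unfolding assms(6) K_def[symmetric] using mK by (intro Max_in) (auto simp: K_def)
  then have kn: "k \<le> n" unfolding K_def by auto
  have JT: "J \<subseteq> {1..n} - {i}" unfolding J_def using kn by auto
  have finJ: "finite J" unfolding J_def by simp
  have wnn: "w j \<ge> 0" for j unfolding w_def by simp
  have Am[measurable]: "A j \<in> sets borel" for j unfolding A_def by measurable
  have cardP: "card P = fact n" unfolding P_def using card_permutations[of "{1..n}" n] by simp
  have finP: "finite P" unfolding P_def by (simp add: finite_permutations)
  have pw: "(\<Sum>\<pi>\<in>P. c_m n m v S s i r \<pi>) \<le> fact n * g r" for r
  proof -
    define T where "T = {j\<in>J. r \<notin> A j}"
    define N where "N = {j\<in>J. r \<in> A j}"
    define t where "t = card T"
    define q where "q = t + 1 - m"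
    have TJ: "T \<subseteq> J" unfolding T_def by auto
    have finT: "finite T" using finJ TJ finite_subset by auto
    have finN: "finite N" unfolding N_def using finJ by auto
    have Tn: "T \<subseteq> {1..n} - {i}" using JT TJ by auto
    have iT: "i \<notin> T" unfolding T_def J_def by auto
    have cn: "card ({1..n} - {i}) = n - 1" using assms(7) by simp
    have tle: "t \<le> n - 1" unfolding t_def using card_mono[OF _ Tn] cn by simp
    have cle: "c_m n m v S s i r \<pi> \<le> (if q \<le> card {j\<in>T \<union> {i}. \<pi> j < \<pi> i} then 1 else 0)" if "\<pi> \<in> P" for \<pi>
    proof (cases "n - m \<le> card {j \<in> {1..n} - {i}. gt_pi \<pi> (f_r r (v i s)) i (f_r r (lower_est v S s i j)) j}")
      case False
      then show ?thesis unfolding c_m_def by simp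
    next
      case True
      define B where "B = {j \<in> {1..n} - {i}. gt_pi \<pi> (f_r r V) i (f_r r (L j)) j}"
      have sub: "B \<subseteq> (({1..n} - {i}) - T) \<union> {j\<in>T. \<pi> j < \<pi> i}"
      proof
        fix j assume jB: "j \<in> B"
        show "j \<in> (({1..n} - {i}) - T) \<union> {j\<in>T. \<pi> j < \<pi> i}"
        proof (cases "j \<in> T")
          case True
          then have "\<not> f_r r (L j) < f_r r V" unfolding T_def A_def by auto
          with jB True show ?thesis unfolding B_def gt_pi_def by auto
        next
          case False with jB show ?thesis unfolding B_def by auto
        qed
      qed
      have "card B \<le> card ((({1..n} - {i}) - T) \<union> {j\<in>T. \<pi> j < \<pi> i})"
        by (rule card_mono[OF _ sub]) (use finT in simp)
      also have "\<dots> \<le> card (({1..n} - {i}) - T) + card {j\<in>T. \<pi> j < \<pi> i}" by (rule card_Un_le)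
      also have "card (({1..n} - {i}) - T) = n - 1 - t"
        unfolding t_def using card_Diff_subset[OF finT Tn] cn by simp
      finally have cB: "card B \<le> n - 1 - t + card {j\<in>T. \<pi> j < \<pi> i}" .
      have "n - m \<le> card B" using True unfolding B_def V_def L_def .
      have eqX: "{j\<in>T \<union> {i}. \<pi> j < \<pi> i} = {j\<in>T. \<pi> j < \<pi> i}" by auto
      have "q \<le> card {j\<in>T. \<pi> j < \<pi> i}"
      proof -
        define X where "X = card {j\<in>T. \<pi> j < \<pi> i}"
        have "n - m \<le> n - 1 - t + X" using cB \<open>n - m \<le> card B\<close> unfolding X_def by simp
        then have "t + 1 - m \<le> X" using tle assms(1,2) by simp
        then show ?thesis unfolding q_def X_def .
      qed
      then show ?thesis unfolding eqX c_m_def by simp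
    qed
    define Q where "Q = {\<pi>. \<pi> permutes {1..n} \<and> q \<le> card {j\<in>T \<union> {i}. \<pi> j < \<pi> i}}"
    have "(\<Sum>\<pi>\<in>P. c_m n m v S s i r \<pi>) \<le> (\<Sum>\<pi>\<in>P. if q \<le> card {j\<in>T \<union> {i}. \<pi> j < \<pi> i} then 1 else 0)"
      by (rule sum_mono) (rule cle)
    also have "\<dots> = (\<Sum>\<pi>\<in>{\<pi>\<in>P. q \<le> card {j\<in>T \<union> {i}. \<pi> j < \<pi> i}}. 1)"
      by (rule sum.inter_filter[symmetric, OF finP])
    also have "\<dots> = real (card Q)" unfolding Q_def P_def by simp
    finally have s1: "(\<Sum>\<pi>\<in>P. c_m n m v S s i r \<pi>) \<le> real (card Q)" .
    have pc: "card Q * card (T \<union> {i}) = fact (card {1..n}) * (card (T \<union> {i}) - q)"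
      unfolding Q_def by (rule perm_count) (use Tn assms(7) in auto)
    have cTi: "card (T \<union> {i}) = t + 1" unfolding t_def using iT finT by simp
    have "real (card Q) * (real t + 1) = fact n * real (t + 1 - q)"
    proof -
      have pc': "card Q * (t + 1) = fact n * (t + 1 - q)" using pc cTi by simp
      have "real (card Q * (t + 1)) = real (fact n * (t + 1 - q))" using pc' by (simp only:)
      then show ?thesis by (simp only: of_nat_mult of_nat_fact of_nat_add of_nat_1)
    qed
    also have "\<dots> \<le> fact n * real m"
      unfolding q_def by (intro mult_left_mono) auto
    finally have "real (card Q) * (real t + 1) \<le> fact n * real m" .
    then have s2: "real (card Q) \<le> fact n * (real m / (real t + 1))"
      by (simp add: field_simps)
    define h where "h j = 1 / (real j * (real j + 1))" for j
    have wh: "w j = real m * h j" for j unfolding w_def h_def by simp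
    have sumN: "(\<Sum>j\<in>J. w j * indicator (A j) r) = real m * (\<Sum>j\<in>N. h j)"
    proof -
      have "(\<Sum>j\<in>N. w j) = (\<Sum>j\<in>J. if r \<in> A j then w j else 0)"
        unfolding N_def by (rule sum.inter_filter[OF finJ])
      also have "\<dots> = (\<Sum>j\<in>J. w j * indicator (A j) r)" by (intro sum.cong refl) (simp add: indicator_def)
      finally show ?thesis unfolding wh by (simp add: sum_distrib_left)
    qed
    have JTN: "J = T \<union> N" "T \<inter> N = {}" unfolding T_def N_def by auto
    have cJ: "card J = t + card N" unfolding t_def JTN(1) using card_Un_disjoint[OF finT finN JTN(2)] by simp
    have key: "1 / (real t + 1) \<le> h i + 1 / (real k + 1) + (\<Sum>j\<in>N. h j)"
    proof (cases "i \<in> {1..k}")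
      case True
      have cJ': "card J = k - 1" unfolding J_def using True by simp
      have iN: "i \<notin> N" unfolding N_def J_def by auto
      have NJ: "N \<subseteq> J" unfolding N_def by auto
      have sub: "insert i N \<subseteq> {1..k}" using True NJ unfolding J_def by auto
      note H = harm[OF sub]
      have c1: "card (insert i N) = card N + 1" using iN finN by simp
      have e: "real k - real (card (insert i N)) + 1 = real t + 1"
        using cJ cJ' c1 True by auto
      have s: "(\<Sum>j\<in>insert i N. 1 / (real j * (real j + 1))) = h i + (\<Sum>j\<in>N. h j)"
        using iN finN unfolding h_def by simp
      show ?thesis using H e s by simp
    next
      case False
      have cJ': "card J = k" unfolding J_def using False by simp
      have NJ: "N \<subseteq> J" unfolding N_def by auto
      have sub: "N \<subseteq> {1..k}" using NJ unfolding J_def by auto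
      note H = harm[OF sub]
      have e: "real k - real (card N) + 1 = real t + 1" using cJ cJ' by auto
      have hi: "h i \<ge> 0" unfolding h_def by simp
      have "1 / (real t + 1) - 1 / (real k + 1) \<le> (\<Sum>j\<in>N. h j)" using H e unfolding h_def by simp
      then show ?thesis using hi by linarith
    qed
    have "real m / (real t + 1) \<le> g r"
    proof -
      have "real m * (1 / (real t + 1)) \<le> real m * (h i + 1 / (real k + 1) + (\<Sum>j\<in>N. h j))"
        using key by (intro mult_left_mono) auto
      then show ?thesis unfolding g_def C_def sumN h_def by (simp add: algebra_simps)
    qed
    then have "fact n * (real m / (real t + 1)) \<le> fact n * g r" by (intro mult_left_mono) auto
    then show ?thesis using s1 s2 by linarith
  qed
  have cm: "(\<lambda>r. c_m n m v S s i r \<pi>) \<in> borel_measurable borel" for \<pi> by (rule c_meas)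
  have c01: "\<bar>c_m n m v S s i r \<pi>\<bar> \<le> 1" for r \<pi> unfolding c_m_def by simp
  have ci: "set_integrable lborel {0..<1::real} (\<lambda>r. c_m n m v S s i r \<pi>)" for \<pi>
    by (rule integrable_unit[OF cm c01])
  have sumc_m: "(\<lambda>r. \<Sum>\<pi>\<in>P. c_m n m v S s i r \<pi>) \<in> borel_measurable borel"
    using cm by (intro borel_measurable_sum) auto
  have sumc_b: "\<bar>\<Sum>\<pi>\<in>P. c_m n m v S s i r \<pi>\<bar> \<le> real (card P)" for r
  proof -
    have "\<bar>\<Sum>\<pi>\<in>P. c_m n m v S s i r \<pi>\<bar> \<le> (\<Sum>\<pi>\<in>P. \<bar>c_m n m v S s i r \<pi>\<bar>)" by (rule sum_abs)
    also have "\<dots> \<le> (\<Sum>\<pi>\<in>P. 1)" using c01 by (intro sum_mono) auto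
    finally show ?thesis by simp
  qed
  have sci: "set_integrable lborel {0..<1::real} (\<lambda>r. \<Sum>\<pi>\<in>P. c_m n m v S s i r \<pi>)"
    by (rule integrable_unit[OF sumc_m sumc_b])
  have gm: "g \<in> borel_measurable borel" unfolding g_def by measurable
  have sb: "\<bar>\<Sum>j\<in>J. w j * indicator (A j) r\<bar> \<le> (\<Sum>j\<in>J. w j)" for r
  proof -
    have "\<bar>\<Sum>j\<in>J. w j * indicator (A j) r\<bar> \<le> (\<Sum>j\<in>J. \<bar>w j * indicator (A j) r\<bar>)" by (rule sum_abs)
    also have "\<dots> \<le> (\<Sum>j\<in>J. w j)" using wnn by (intro sum_mono) (auto simp: indicator_def)
    finally show ?thesis .
  qed
  have gb: "\<bar>g r\<bar> \<le> \<bar>C\<bar> + (\<Sum>j\<in>J. w j)" for r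
  proof -
    have "\<bar>g r\<bar> \<le> \<bar>C\<bar> + \<bar>\<Sum>j\<in>J. w j * indicator (A j) r\<bar>" unfolding g_def by (rule abs_triangle_ineq)
    then show ?thesis using sb[of r] by simp
  qed
  have gi: "set_integrable lborel {0..<1::real} g" by (rule integrable_unit[OF gm gb])
  have swap: "(\<Sum>\<pi>\<in>P. LINT r:{0..<1::real}|lborel. c_m n m v S s i r \<pi>) = (LINT r:{0..<1::real}|lborel. \<Sum>\<pi>\<in>P. c_m n m v S s i r \<pi>)"
    unfolding set_lebesgue_integral_def scaleR_sum_right
    by (subst Bochner_Integration.integral_sum) (use ci in \<open>auto simp: set_integrable_def\<close>)
  have "(LINT r:{0..<1::real}|lborel. \<Sum>\<pi>\<in>P. c_m n m v S s i r \<pi>) \<le> (LINT r:{0..<1::real}|lborel. fact n * g r)"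
    by (rule set_integral_mono[OF sci]) (use gi pw in auto)
  also have "\<dots> = fact n * (LINT r:{0..<1::real}|lborel. g r)" by simp
  finally have step1: "(\<Sum>\<pi>\<in>P. LINT r:{0..<1::real}|lborel. c_m n m v S s i r \<pi>) \<le> fact n * (LINT r:{0..<1::real}|lborel. g r)"
    using swap by simp
  have intA: "(LINT r:{0..<1::real}|lborel. w j * indicator (A j) r) = w j * measure lborel ({0..<1} \<inter> A j)" for j
  proof -
    have "(LINT r:{0..<1::real}|lborel. w j * indicator (A j) r) = integral\<^sup>L lborel (\<lambda>r. w j * indicator ({0..<1} \<inter> A j) r)"
      unfolding set_lebesgue_integral_def by (intro Bochner_Integration.integral_cong) (auto simp: indicator_def)
    also have "\<dots> = w j * integral\<^sup>L lborel (indicator ({0..<1} \<inter> A j))" by simp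
    also have "\<dots> = w j * measure lborel ({0..<1} \<inter> A j)" by simp
    finally show ?thesis .
  qed
  have intiA: "set_integrable lborel {0..<1::real} (\<lambda>r. w j * indicator (A j) r)" for j
    by (rule integrable_unit[of _ "\<bar>w j\<bar>"]) (auto simp: indicator_def)
  have intsum: "(LINT r:{0..<1::real}|lborel. \<Sum>j\<in>J. w j * indicator (A j) r) = (\<Sum>j\<in>J. w j * measure lborel ({0..<1} \<inter> A j))"
  proof -
    have "(LINT r:{0..<1::real}|lborel. \<Sum>j\<in>J. w j * indicator (A j) r) = (\<Sum>j\<in>J. LINT r:{0..<1::real}|lborel. w j * indicator (A j) r)"
      unfolding set_lebesgue_integral_def scaleR_sum_right
      by (subst Bochner_Integration.integral_sum) (use intiA in \<open>auto simp: set_integrable_def\<close>)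
    then show ?thesis by (simp only: intA)
  qed
  have cint: "(LINT r:{0..<1::real}|lborel. C) = C" by (simp add: set_integral_const)
  have sumi: "set_integrable lborel {0..<1::real} (\<lambda>r. \<Sum>j\<in>J. w j * indicator (A j) r)"
    by (rule integrable_unit[of _ "\<Sum>j\<in>J. w j"]) (use sb in auto)
  have "(LINT r:{0..<1::real}|lborel. g r) = C + (\<Sum>j\<in>J. w j * measure lborel ({0..<1} \<inter> A j))"
    unfolding g_def
    by (subst set_integral_add(2)) (use sumi intsum cint in \<open>auto intro: integrable_unit[of _ "\<bar>C\<bar>"]\<close>)
  also have "\<dots> \<le> C + (\<Sum>j\<in>J. w j * log2_dag V (L j))"
  proof -
    have "w j * measure lborel ({0..<1} \<inter> A j) \<le> w j * log2_dag V (L j)" if "j \<in> J" for j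
      using prob_bound[OF Vpos Lnn, of j] JT that wnn unfolding A_def by (intro mult_left_mono) auto
    then show ?thesis by (intro add_left_mono sum_mono) auto
  qed
  finally have step2: "(LINT r:{0..<1::real}|lborel. g r) \<le> C + (\<Sum>j\<in>J. w j * log2_dag V (L j))" .
  have "exp_c_m n m v S s i = (\<Sum>\<pi>\<in>P. LINT r:{0..<1::real}|lborel. c_m n m v S s i r \<pi>) / fact n"
    unfolding exp_c_m_def P_def ..
  also have "\<dots> \<le> fact n * (LINT r:{0..<1::real}|lborel. g r) / fact n"
    using step1 by (intro divide_right_mono) auto
  also have "\<dots> = (LINT r:{0..<1::real}|lborel. g r)" by simp
  also have "\<dots> \<le> C + (\<Sum>j\<in>J. w j * log2_dag V (L j))" by (rule step2)
  finally show ?thesis unfolding C_def J_def w_def V_def L_def by simp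
qed

end
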